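(* Let $\alpha\in[1/2,1)\cup(1,\infty)$ and let $p_{X,Y}=p_Xp_{Y\mid X}$ be a joint distribution on finite alphabets $\mathcal X\times\mathcal Y$. Starting from initial distributions $q_X^{(0)}$ on $\mathcal X$ and $q_Y^{(0)}$ on $\mathcal Y$, let $\{q_X^{(k)}\}_{k\ge0}$ and $\{q_Y^{(k)}\}_{k\ge0}$ be generated by the alternating optimization algorithm which, at each step, replaces $q_X$ by $$q_X^*(x)=\frac{\big[\sum_yp_{X,Y}(x,y)^\alpha q_Y(y)^{1-\alpha}\big]^{1/\alpha}}{\sum_{x'}\big[\sum_yp_{X,Y}(x',y)^\alpha q_Y(y)^{1-\alpha}\big]^{1/\alpha}}$$ computed from the current $q_Y$, and then replaces $q_Y$ by $$q_Y^*(y)=\frac{\big[\sum_xp_{X,Y}(x,y)^\alpha q_X(x)^{1-\alpha}\big]^{1/\alpha}}{\sum_{y'}\big[\sum_xp_{X,Y}(x,y')^\alpha q_X(x)^{1-\alpha}\big]^{1/\alpha}}$$ computed from the current $q_X$ (these are the exact minimizers of $D_\alpha(p_Xp_{Y\mid X}\|q_Xq_Y)$ in one argument with the other fixed). Then $$\lim_{k\to\infty}D_\alpha(p_Xp_{Y\mid X}\|q_X^{(k)}q_Y^{(k)})=I_\alpha^{\mathrm{LP}}(X;Y).$$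
   Context: $D_\alpha(p\|q):=\frac{1}{\alpha-1}\log\sum_zp(z)^\alpha q(z)^{1-\alpha}$ is the Rényi divergence of order $\alpha$, and the Lapidoth–Pfister mutual information is $I_\alpha^{\mathrm{LP}}(X;Y):=\min_{q_X}\min_{q_Y}D_\alpha(p_Xp_{Y\mid X}\|q_Xq_Y)$. *)

theory Defs
  imports "HOL-Analysis.Analysis"
begin

definition is_dist :: "('a::finite \<Rightarrow> real) \<Rightarrow> bool" where
  "is_dist q \<longleftrightarrow> (\<forall>z. 0 \<le> q z) \<and> (\<Sum>z\<in>UNIV. q z) = 1"

text \<open>Renyi divergence of order alpha (natural logarithm), with the standard
  conventions: value +infinity if alpha > 1 and p is not absolutely continuous
  w.r.t. q, or if the sum is zero (disjoint supports, alpha < 1); terms with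
  p z = 0 contribute 0.\<close>
definition renyi_div :: "real \<Rightarrow> ('a::finite \<Rightarrow> real) \<Rightarrow> ('a \<Rightarrow> real) \<Rightarrow> ereal" where
  "renyi_div \<alpha> p q =
     (let s = (\<Sum>z\<in>UNIV. p z powr \<alpha> * q z powr (1 - \<alpha>)) in
      if (1 < \<alpha> \<and> (\<exists>z. 0 < p z \<and> q z = 0)) \<or> s = 0 then \<infinity>
      else ereal (ln s / (\<alpha> - 1)))"

definition I_LP :: "real \<Rightarrow> ('x::finite \<times> 'y::finite \<Rightarrow> real) \<Rightarrow> ereal" where
  "I_LP \<alpha> p = (INF qX\<in>{q. is_dist q}. INF qY\<in>{q. is_dist q}.
       renyi_div \<alpha> p (\<lambda>(x, y). qX x * qY y))"

definition qX_star :: "real \<Rightarrow> ('x::finite \<times> 'y::finite \<Rightarrow> real) \<Rightarrow> ('y \<Rightarrow> real) \<Rightarrow> 'x \<Rightarrow> real" where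
  "qX_star \<alpha> p qY x =
     (\<Sum>y\<in>UNIV. p (x, y) powr \<alpha> * qY y powr (1 - \<alpha>)) powr (1 / \<alpha>) /
     (\<Sum>x'\<in>UNIV. (\<Sum>y\<in>UNIV. p (x', y) powr \<alpha> * qY y powr (1 - \<alpha>)) powr (1 / \<alpha>))"

definition qY_star :: "real \<Rightarrow> ('x::finite \<times> 'y::finite \<Rightarrow> real) \<Rightarrow> ('x \<Rightarrow> real) \<Rightarrow> 'y \<Rightarrow> real" where
  "qY_star \<alpha> p qX y =
     (\<Sum>x\<in>UNIV. p (x, y) powr \<alpha> * qX x powr (1 - \<alpha>)) powr (1 / \<alpha>) /
     (\<Sum>y'\<in>UNIV. (\<Sum>x\<in>UNIV. p (x, y') powr \<alpha> * qX x powr (1 - \<alpha>)) powr (1 / \<alpha>))"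

end

theory Submission
  imports Defs
begin

lemma young1:
  fixes g a b :: real
  assumes "0 \<le> g" "g \<le> 1" "0 \<le> a" "0 \<le> b"
  shows "a powr g * b powr (1 - g) \<le> g * a + (1 - g) * b"
proof (cases "a = 0 \<or> b = 0")
  case True
  then show ?thesis using assms by (auto intro!: add_nonneg_nonneg mult_nonneg_nonneg)
next
  case False
  then show ?thesis using Youngs_inequality_0[of g "1-g" a b] assms by auto
qed

lemma young_rev:
  fixes g a b :: real
  assumes "1 \<le> g" "0 \<le> a" "0 < b"
  shows "g * a - (g - 1) * b \<le> a powr g * b powr (1 - g)"
proof (cases "a = 0")
  case True
  then show ?thesis using assms by auto
next
  case False
  hence a: "0 < a" using assms by auto
  have "(a powr g * b powr (1 - g)) powr (1/g) * b powr (1 - 1/g) \<le> (1/g) * (a powr g * b powr (1 - g)) + (1 - 1/g) * b"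
    using young1[of "1/g" "a powr g * b powr (1 - g)" b] assms by auto
  moreover have "(a powr g * b powr (1 - g)) powr (1/g) * b powr (1 - 1/g) = a"
  proof -
    have "(a powr g * b powr (1 - g)) powr (1/g) = a * b powr ((1-g)/g)"
      using assms a by (simp add: powr_mult powr_powr)
    moreover have "b powr ((1-g)/g) * b powr (1 - 1/g) = 1"
    proof -
      have "(1-g)/g + (1 - 1/g) = 0" using assms by (simp add: field_simps)
      thus ?thesis using assms by (metis powr_add powr_zero_eq_one less_irrefl)
    qed
    ultimately show ?thesis by (metis mult.assoc mult.right_neutral)
  qed
  ultimately have "a \<le> (1/g) * (a powr g * b powr (1 - g)) + (1 - 1/g) * b" by simp
  hence "g * a \<le> g * ((1/g) * (a powr g * b powr (1 - g)) + (1 - 1/g) * b)"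
    using assms by (simp add: mult_left_mono)
  also have "\<dots> = a powr g * b powr (1 - g) + (g - 1) * b" using assms by (simp add: field_simps)
  finally show ?thesis by simp
qed

lemma bern_neg:
  fixes r x :: real
  assumes "r \<le> 0" "0 < x"
  shows "1 + r * (x - 1) \<le> x powr r"
proof -
  have "(1 - r) * 1 - ((1 - r) - 1) * x \<le> 1 powr (1 - r) * x powr (1 - (1 - r))"
    using young_rev[of "1-r" 1 x] assms by auto
  thus ?thesis by (simp add: algebra_simps)
qed

lemma pw_concave:
  fixes c a b :: real
  assumes "0 < c" "c \<le> 1/2" "0 \<le> a" "0 \<le> b"
  shows "(a * b) powr c \<le> (1 - 2*c) + c * a + c * b"
proof -
  have h: "(a*b) powr (1/2) \<le> (a + b)/2"
    using young1[of "1/2" a b] assms by (simp add: powr_mult)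
  have "(a * b) powr c = ((a*b) powr (1/2)) powr (2*c)" by (simp add: powr_powr)
  also have "\<dots> \<le> ((a+b)/2) powr (2*c)" using h assms by (intro powr_mono2) auto
  also have "\<dots> = ((a+b)/2) powr (2*c) * 1 powr (1 - 2*c)" by simp
  also have "\<dots> \<le> 2*c*((a+b)/2) + (1 - 2*c)*1" using assms by (intro young1) auto
  also have "\<dots> = (1 - 2*c) + c * a + c * b" by (simp add: field_simps)
  finally show ?thesis .
qed

lemma pw_convex:
  fixes c a b :: real
  assumes "c < 0" "0 < a" "0 < b"
  shows "(1 - 2*c) + c * a + c * b \<le> (a * b) powr c"
proof -
  have h: "(a*b) powr (1/2) \<le> (a + b)/2"
    using young1[of "1/2" a b] assms by (simp add: powr_mult)
  have pos: "0 < (a*b) powr (1/2)" using assms by simp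
  have "(1 - 2*c) + c * a + c * b = 1 + (2*c) * ((a+b)/2 - 1)" by (simp add: algebra_simps)
  also have "\<dots> \<le> ((a+b)/2) powr (2*c)" using assms by (intro bern_neg) auto
  also have "\<dots> \<le> ((a*b) powr (1/2)) powr (2*c)" using h pos assms by (intro powr_mono2') auto
  also have "\<dots> = (a * b) powr c" by (simp add: powr_powr)
  finally show ?thesis .
qed


definition AX :: "real \<Rightarrow> ('x::finite \<times> 'y::finite \<Rightarrow> real) \<Rightarrow> ('y \<Rightarrow> real) \<Rightarrow> 'x \<Rightarrow> real" where
  "AX a p v x = (\<Sum>y\<in>UNIV. p (x, y) powr a * v y powr (1 - a))"
definition ZX :: "real \<Rightarrow> ('x::finite \<times> 'y::finite \<Rightarrow> real) \<Rightarrow> ('y \<Rightarrow> real) \<Rightarrow> real" where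
  "ZX a p v = (\<Sum>x\<in>UNIV. AX a p v x powr (1/a))"
definition BY :: "real \<Rightarrow> ('x::finite \<times> 'y::finite \<Rightarrow> real) \<Rightarrow> ('x \<Rightarrow> real) \<Rightarrow> 'y \<Rightarrow> real" where
  "BY a p u y = (\<Sum>x\<in>UNIV. p (x, y) powr a * u x powr (1 - a))"
definition ZY :: "real \<Rightarrow> ('x::finite \<times> 'y::finite \<Rightarrow> real) \<Rightarrow> ('x \<Rightarrow> real) \<Rightarrow> real" where
  "ZY a p u = (\<Sum>y\<in>UNIV. BY a p u y powr (1/a))"
definition FF :: "real \<Rightarrow> ('x::finite \<times> 'y::finite \<Rightarrow> real) \<Rightarrow> ('x \<Rightarrow> real) \<Rightarrow> ('y \<Rightarrow> real) \<Rightarrow> real" where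
  "FF a p u v = (\<Sum>x\<in>UNIV. \<Sum>y\<in>UNIV. p (x, y) powr a * (u x * v y) powr (1 - a))"
definition rho :: "real \<Rightarrow> ('z::finite \<Rightarrow> real) \<Rightarrow> ('z \<Rightarrow> real) \<Rightarrow> real" where
  "rho a f g = (\<Sum>z\<in>UNIV. f z powr a * g z powr (1 - a))"

lemma qX_star_eq: "qX_star a p v x = AX a p v x powr (1/a) / ZX a p v"
  by (simp add: qX_star_def AX_def ZX_def)
lemma qY_star_eq: "qY_star a p u y = BY a p u y powr (1/a) / ZY a p u"
  by (simp add: qY_star_def BY_def ZY_def)

lemma AX_nonneg: "0 \<le> AX a p v x" by (simp add: AX_def sum_nonneg)
lemma BY_nonneg: "0 \<le> BY a p u y" by (simp add: BY_def sum_nonneg)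
lemma ZX_nonneg: "0 \<le> ZX a p v" by (simp add: ZX_def sum_nonneg)
lemma ZY_nonneg: "0 \<le> ZY a p u" by (simp add: ZY_def sum_nonneg)
lemma qX_star_nonneg: "0 \<le> qX_star a p v x" by (simp add: qX_star_eq ZX_nonneg)
lemma qY_star_nonneg: "0 \<le> qY_star a p u y" by (simp add: qY_star_eq ZY_nonneg)

lemma FF_X: "FF a p u v = (\<Sum>x\<in>UNIV. u x powr (1 - a) * AX a p v x)"
  unfolding FF_def AX_def by (simp add: powr_mult sum_distrib_left algebra_simps)

lemma FF_Y: "FF a p u v = (\<Sum>y\<in>UNIV. v y powr (1 - a) * BY a p u y)"
  unfolding FF_def BY_def by (subst sum.swap) (simp add: powr_mult sum_distrib_left algebra_simps)

lemma ZX_zero_AX: "ZX a p v = 0 \<Longrightarrow> AX a p v x = 0"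
proof -
  assume "ZX a p v = 0"
  hence "\<forall>x\<in>UNIV. AX a p v x powr (1/a) = 0"
    unfolding ZX_def by (subst sum_nonneg_eq_0_iff[symmetric]) auto
  thus ?thesis by simp
qed

lemma ZY_zero_BY: "ZY a p u = 0 \<Longrightarrow> BY a p u y = 0"
proof -
  assume "ZY a p u = 0"
  hence "\<forall>y\<in>UNIV. BY a p u y powr (1/a) = 0"
    unfolding ZY_def by (subst sum_nonneg_eq_0_iff[symmetric]) auto
  thus ?thesis by simp
qed

lemma AX_eq: assumes "a \<noteq> 0" shows "AX a p v x = ZX a p v powr a * qX_star a p v x powr a"
proof (cases "ZX a p v = 0")
  case True thus ?thesis using ZX_zero_AX by auto
next
  case False
  have "qX_star a p v x powr a = AX a p v x / ZX a p v powr a"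
    using assms AX_nonneg[of a p v x] by (simp add: qX_star_eq powr_divide powr_powr)
  thus ?thesis using False ZX_nonneg[of a p v] by simp
qed

lemma BY_eq: assumes "a \<noteq> 0" shows "BY a p u y = ZY a p u powr a * qY_star a p u y powr a"
proof (cases "ZY a p u = 0")
  case True thus ?thesis using ZY_zero_BY by auto
next
  case False
  have "qY_star a p u y powr a = BY a p u y / ZY a p u powr a"
    using assms BY_nonneg[of a p u y] by (simp add: qY_star_eq powr_divide powr_powr)
  thus ?thesis using False ZY_nonneg[of a p u] by simp
qed

lemma ident_X: assumes "a \<noteq> 0"
  shows "FF a p u v = ZX a p v powr a * rho a (qX_star a p v) u"
  unfolding FF_X rho_def
  by (simp add: AX_eq[OF assms] sum_distrib_left algebra_simps)

lemma ident_Y: assumes "a \<noteq> 0"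
  shows "FF a p u v = ZY a p u powr a * rho a (qY_star a p u) v"
  unfolding FF_Y rho_def
  by (simp add: BY_eq[OF assms] sum_distrib_left algebra_simps)

lemma sum_qX_star: "ZX a p v \<noteq> 0 \<Longrightarrow> (\<Sum>x\<in>UNIV. qX_star a p v x) = 1"
  by (simp add: qX_star_eq ZX_def[symmetric] flip: sum_divide_distrib)
lemma sum_qY_star: "ZY a p u \<noteq> 0 \<Longrightarrow> (\<Sum>y\<in>UNIV. qY_star a p u y) = 1"
  by (simp add: qY_star_eq ZY_def[symmetric] flip: sum_divide_distrib)

lemma dist_qX_star: "ZX a p v \<noteq> 0 \<Longrightarrow> is_dist (qX_star a p v)"
  by (simp add: is_dist_def sum_qX_star qX_star_nonneg)
lemma dist_qY_star: "ZY a p u \<noteq> 0 \<Longrightarrow> is_dist (qY_star a p u)"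
  by (simp add: is_dist_def sum_qY_star qY_star_nonneg)

lemma rho_self: assumes "\<And>z. 0 \<le> f z" shows "rho a f f = (\<Sum>z\<in>UNIV. f z)"
  unfolding rho_def using assms by (simp flip: powr_add)

lemma FF_qX_star: assumes "a \<noteq> 0" shows "FF a p (qX_star a p v) v = ZX a p v powr a"
proof (cases "ZX a p v = 0")
  case True thus ?thesis by (simp add: ident_X[OF assms])
next
  case False thus ?thesis
    by (simp add: ident_X[OF assms] rho_self qX_star_nonneg sum_qX_star)
qed

lemma FF_qY_star: assumes "a \<noteq> 0" shows "FF a p u (qY_star a p u) = ZY a p u powr a"
proof (cases "ZY a p u = 0")
  case True thus ?thesis by (simp add: ident_Y[OF assms])
next
  case False thus ?thesis
    by (simp add: ident_Y[OF assms] rho_self qY_star_nonneg sum_qY_star)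
qed

lemma rho_le1:
  assumes "0 < a" "a \<le> 1" "\<And>z. 0 \<le> f z" "\<And>z. 0 \<le> g z"
    "(\<Sum>z\<in>UNIV. f z) \<le> 1" "(\<Sum>z\<in>UNIV. g z) \<le> 1"
  shows "rho a f g \<le> 1"
proof -
  have "rho a f g \<le> (\<Sum>z\<in>UNIV. a * f z + (1 - a) * g z)"
    unfolding rho_def using assms by (intro sum_mono young1) auto
  also have "\<dots> = a * (\<Sum>z\<in>UNIV. f z) + (1 - a) * (\<Sum>z\<in>UNIV. g z)"
    by (simp add: sum.distrib sum_distrib_left)
  also have "\<dots> \<le> a * 1 + (1 - a) * 1" using assms
    by (intro add_mono mult_left_mono) auto
  finally show ?thesis by simp
qed

lemma rho_ge1:
  assumes "1 \<le> a" "\<And>z. 0 \<le> f z" "\<And>z. 0 \<le> g z" "\<And>z. 0 < f z \<Longrightarrow> 0 < g z"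
    "(\<Sum>z\<in>UNIV. f z) = 1" "(\<Sum>z\<in>UNIV. g z) \<le> 1"
  shows "1 \<le> rho a f g"
proof -
  have "(\<Sum>z\<in>UNIV. a * f z - (a - 1) * g z) \<le> rho a f g"
    unfolding rho_def
  proof (intro sum_mono)
    fix z
    show "a * f z - (a - 1) * g z \<le> f z powr a * g z powr (1 - a)"
    proof (cases "g z = 0")
      case True
      hence "f z = 0" using assms(2,4)[of z] by force
      thus ?thesis using True by simp
    next
      case False
      thus ?thesis using assms(2,3)[of z] assms(1) by (intro young_rev) auto
    qed
  qed
  moreover have "(\<Sum>z\<in>UNIV. a * f z - (a - 1) * g z) = a * (\<Sum>z\<in>UNIV. f z) - (a - 1) * (\<Sum>z\<in>UNIV. g z)"
    by (simp add: sum_subtractf sum_distrib_left)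
  moreover have "a * 1 - (a - 1) * (\<Sum>z\<in>UNIV. g z) \<ge> 1"
  proof -
    have "(a - 1) * (\<Sum>z\<in>UNIV. g z) \<le> (a - 1) * 1" using assms(1,6) by (intro mult_left_mono) auto
    thus ?thesis by simp
  qed
  ultimately show ?thesis using assms(5) by simp
qed

lemma FF_as_rho:
  "FF a p u v = rho a p (\<lambda>(x, y). u x * v y)"
  unfolding FF_def rho_def
  by (simp add: UNIV_Times_UNIV[symmetric] sum.cartesian_product case_prod_unfold del: UNIV_Times_UNIV)


lemma AX_pos: assumes "0 < p (x, y)" "0 < v y" shows "0 < AX a p v x"
proof -
  have "0 < p (x, y) powr a * v y powr (1 - a)" using assms by simp
  also have "\<dots> \<le> AX a p v x" unfolding AX_def
    by (rule member_le_sum[where f = "\<lambda>y. p (x, y) powr a * v y powr (1 - a)"]) auto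
  finally show ?thesis .
qed

lemma BY_pos: assumes "0 < p (x, y)" "0 < u x" shows "0 < BY a p u y"
proof -
  have "0 < p (x, y) powr a * u x powr (1 - a)" using assms by simp
  also have "\<dots> \<le> BY a p u y" unfolding BY_def
    by (rule member_le_sum[where f = "\<lambda>x. p (x, y) powr a * u x powr (1 - a)"]) auto
  finally show ?thesis .
qed

lemma ZX_pos: assumes "0 < AX a p v x" shows "0 < ZX a p v"
proof -
  have "0 < AX a p v x powr (1/a)" using assms by simp
  also have "\<dots> \<le> ZX a p v" unfolding ZX_def
    by (rule member_le_sum[where f = "\<lambda>x. AX a p v x powr (1/a)"]) auto
  finally show ?thesis .
qed

lemma ZY_pos: assumes "0 < BY a p u y" shows "0 < ZY a p u"
proof -
  have "0 < BY a p u y powr (1/a)" using assms by simp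
  also have "\<dots> \<le> ZY a p u" unfolding ZY_def
    by (rule member_le_sum[where f = "\<lambda>y. BY a p u y powr (1/a)"]) auto
  finally show ?thesis .
qed

lemma qX_star_pos: assumes "0 < p (x, y)" "0 < v y" shows "0 < qX_star a p v x"
proof -
  have h: "0 < AX a p v x" using assms by (rule AX_pos)
  thus ?thesis using ZX_pos[OF h] by (simp add: qX_star_eq)
qed

lemma qY_star_pos: assumes "0 < p (x, y)" "0 < u x" shows "0 < qY_star a p u y"
proof -
  have h: "0 < BY a p u y" using assms by (rule BY_pos)
  thus ?thesis using ZY_pos[OF h] by (simp add: qY_star_eq)
qed

lemma qX_star_supp: assumes "0 < qX_star a p v x" "\<And>z. 0 \<le> p z" shows "\<exists>y. 0 < p (x, y)"
proof (rule ccontr)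
  assume "\<not> ?thesis"
  hence "\<And>y. p (x, y) = 0" using assms(2) by (metis less_eq_real_def)
  hence "AX a p v x = 0" by (simp add: AX_def)
  thus False using assms(1) by (simp add: qX_star_eq)
qed

lemma qY_star_supp: assumes "0 < qY_star a p u y" "\<And>z. 0 \<le> p z" shows "\<exists>x. 0 < p (x, y)"
proof (rule ccontr)
  assume "\<not> ?thesis"
  hence "\<And>x. p (x, y) = 0" using assms(2) by (metis less_eq_real_def)
  hence "BY a p u y = 0" by (simp add: BY_def)
  thus False using assms(1) by (simp add: qY_star_eq)
qed

lemma FF_nonneg: "0 \<le> FF a p u v" by (simp add: FF_def sum_nonneg)

lemma FF_pos: assumes "0 < p (x, y)" "0 < u x" "0 < v y" shows "0 < FF a p u v"
proof -
  have "0 < p (x, y) powr a * (u x * v y) powr (1 - a)" using assms by simp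
  also have "\<dots> \<le> (\<Sum>y\<in>UNIV. p (x, y) powr a * (u x * v y) powr (1 - a))"
    by (rule member_le_sum[where f = "\<lambda>y. p (x, y) powr a * (u x * v y) powr (1 - a)"]) auto
  also have "\<dots> \<le> FF a p u v" unfolding FF_def
    by (rule member_le_sum[where f = "\<lambda>x. \<Sum>y\<in>UNIV. p (x, y) powr a * (u x * v y) powr (1 - a)"])
       (auto intro: sum_nonneg)
  finally show ?thesis .
qed

lemma sum_prod_dist:
  fixes u :: "'x::finite \<Rightarrow> real" and v :: "'y::finite \<Rightarrow> real"
  assumes "is_dist u" "is_dist v"
  shows "is_dist (\<lambda>(x, y). u x * v y)"
proof -
  have "(\<Sum>z\<in>UNIV. (case z of (x, y) \<Rightarrow> u x * v y)) = (\<Sum>x\<in>UNIV. \<Sum>y\<in>UNIV. u x * v y)"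
    by (simp add: UNIV_Times_UNIV[symmetric] sum.cartesian_product case_prod_unfold del: UNIV_Times_UNIV)
  also have "\<dots> = (\<Sum>x\<in>UNIV. u x) * (\<Sum>y\<in>UNIV. v y)" by (simp add: sum_product)
  finally show ?thesis using assms unfolding is_dist_def by auto
qed

lemma FF_le1: assumes "0 < a" "a \<le> 1" "is_dist p" "is_dist u" "is_dist v" shows "FF a p u v \<le> 1"
  unfolding FF_as_rho using sum_prod_dist[OF assms(4,5)] assms
  by (intro rho_le1) (auto simp: is_dist_def)

lemma FF_ge1: assumes "1 \<le> a" "is_dist p" "is_dist u" "is_dist v"
  "\<And>x y. 0 < p (x, y) \<Longrightarrow> 0 < u x * v y"
  shows "1 \<le> FF a p u v"
  unfolding FF_as_rho using sum_prod_dist[OF assms(3,4)] assms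
  by (intro rho_ge1) (auto simp: is_dist_def)

locale LPalg =
  fixes a :: real and p :: "'x::finite \<times> 'y::finite \<Rightarrow> real"
    and qX :: "nat \<Rightarrow> 'x \<Rightarrow> real" and qY :: "nat \<Rightarrow> 'y \<Rightarrow> real"
  assumes a_ge: "1/2 \<le> a" and a_ne: "a \<noteq> 1" and p: "is_dist p"
    and iX: "is_dist (qX 0)" "\<forall>x. 0 < qX 0 x"
    and iY: "is_dist (qY 0)" "\<forall>y. 0 < qY 0 y"
    and sX: "\<forall>k. qX (Suc k) = qX_star a p (qY k)"
    and sY: "\<forall>k. qY (Suc k) = qY_star a p (qX (Suc k))"
begin

lemma a_pos: "0 < a" using a_ge by simp
lemma a_nz: "a \<noteq> 0" using a_pos by simp
lemma p_nonneg: "0 \<le> p z" using p by (cases z) (auto simp: is_dist_def)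

lemma p_ex: "\<exists>x y. 0 < p (x, y)"
proof (rule ccontr)
  assume "\<not> ?thesis"
  hence "\<And>z. p z = 0" using p_nonneg by (metis less_eq_real_def surj_pair)
  thus False using p by (simp add: is_dist_def)
qed

lemma pos_all: "is_dist (qX k) \<and> is_dist (qY k) \<and> (\<forall>x y. 0 < p (x, y) \<longrightarrow> 0 < qX k x \<and> 0 < qY k y)"
proof (induction k)
  case 0 thus ?case using iX iY by auto
next
  case (Suc k)
  have X: "0 < qX (Suc k) x" if "0 < p (x, y)" for x y
    using Suc that sX by (auto intro: qX_star_pos)
  have Y: "0 < qY (Suc k) y" if "0 < p (x, y)" for x y
    using X[OF that] that sY by (auto intro: qY_star_pos)
  obtain x0 y0 where xy0: "0 < p (x0, y0)" using p_ex by blast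
  have "0 < ZX a p (qY k)" using Suc xy0 by (intro ZX_pos AX_pos) auto
  hence dX: "is_dist (qX (Suc k))" using sX dist_qX_star by (metis less_irrefl)
  have "0 < ZY a p (qX (Suc k))" using X[OF xy0] xy0 by (intro ZY_pos BY_pos) auto
  hence dY: "is_dist (qY (Suc k))" using sY dist_qY_star by (metis less_irrefl)
  show ?case using X Y dX dY by blast
qed

lemma distX: "is_dist (qX k)" using pos_all by blast
lemma distY: "is_dist (qY k)" using pos_all by blast
lemma posX: "0 < p (x, y) \<Longrightarrow> 0 < qX k x" using pos_all by blast
lemma posY: "0 < p (x, y) \<Longrightarrow> 0 < qY k y" using pos_all by blast
lemma nnX: "0 \<le> qX k x" using distX by (simp add: is_dist_def)
lemma nnY: "0 \<le> qY k y" using distY by (simp add: is_dist_def)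
lemma le1X: "qX k x \<le> 1"
proof -
  have "qX k x \<le> (\<Sum>x\<in>UNIV. qX k x)" by (rule member_le_sum) (auto simp: nnX)
  thus ?thesis using distX by (simp add: is_dist_def)
qed
lemma le1Y: "qY k y \<le> 1"
proof -
  have "qY k y \<le> (\<Sum>y\<in>UNIV. qY k y)" by (rule member_le_sum) (auto simp: nnY)
  thus ?thesis using distY by (simp add: is_dist_def)
qed

lemma suppX: "0 < qX (Suc k) x \<Longrightarrow> \<exists>y. 0 < p (x, y)"
  using sX qX_star_supp[of a p "qY k" x] p_nonneg by auto
lemma suppY: "0 < qY (Suc k) y \<Longrightarrow> \<exists>x. 0 < p (x, y)"
  using sY qY_star_supp[of a p "qX (Suc k)" y] p_nonneg by auto

definition F where "F k = FF a p (qX k) (qY k)"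
definition H where "H k = FF a p (qX (Suc k)) (qY k)"

lemma F_Suc: "F (Suc k) = ZY a p (qX (Suc k)) powr a"
  unfolding F_def using sY FF_qY_star[OF a_nz] by metis
lemma H_eq: "H k = ZX a p (qY k) powr a"
  unfolding H_def using sX FF_qX_star[OF a_nz] by metis
lemma F_H: "F k = H k * rho a (qX (Suc k)) (qX k)"
  unfolding F_def H_eq using ident_X[OF a_nz] sX by metis
lemma H_F: "H k = F (Suc k) * rho a (qY (Suc k)) (qY k)"
  unfolding H_def F_Suc using ident_Y[OF a_nz] sY by metis

lemma F_nonneg: "0 \<le> F k" by (simp add: F_def FF_nonneg)
lemma H_nonneg: "0 \<le> H k" by (simp add: H_def FF_nonneg)

lemma mono_lt1: assumes "a < 1" shows "F k \<le> H k" "H k \<le> F (Suc k)"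
proof -
  have "rho a (qX (Suc k)) (qX k) \<le> 1" using assms a_pos distX
    by (intro rho_le1) (auto simp: is_dist_def)
  thus "F k \<le> H k" using F_H H_nonneg by (metis mult_left_le)
  have "rho a (qY (Suc k)) (qY k) \<le> 1" using assms a_pos distY
    by (intro rho_le1) (auto simp: is_dist_def)
  thus "H k \<le> F (Suc k)" using H_F F_nonneg by (metis mult_left_le)
qed

lemma mono_gt1: assumes "1 < a" shows "H k \<le> F k" "F (Suc k) \<le> H k"
proof -
  have "1 \<le> rho a (qX (Suc k)) (qX k)" using assms distX
    by (intro rho_ge1) (auto simp: is_dist_def dest!: suppX intro: posX)
  thus "H k \<le> F k" using F_H H_nonneg by (metis mult_le_cancel_left1 not_le order.strict_trans2 less_eq_real_def)
  have "1 \<le> rho a (qY (Suc k)) (qY k)" using assms distY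
    by (intro rho_ge1) (auto simp: is_dist_def dest!: suppY intro: posY)
  thus "F (Suc k) \<le> H k" using H_F F_nonneg by (metis mult_le_cancel_left1 not_le order.strict_trans2 less_eq_real_def)
qed

lemma F_le1: "a < 1 \<Longrightarrow> F k \<le> 1"
  unfolding F_def using a_pos p distX distY by (intro FF_le1) auto
lemma F_ge1: "1 < a \<Longrightarrow> 1 \<le> F k"
  unfolding F_def using p distX distY by (intro FF_ge1) (auto, meson mult_pos_pos posX posY)

lemma F0_pos: "0 < F 0"
  using p_ex posX posY unfolding F_def by (metis FF_pos)

definition L where "L = lim F"

lemma conv: "F \<longlonglongrightarrow> L \<and> H \<longlonglongrightarrow> L \<and> 0 < L \<and>
   (a < 1 \<longrightarrow> (\<forall>k. F k \<le> L \<and> H k \<le> L)) \<and> (1 < a \<longrightarrow> (\<forall>k. L \<le> F k \<and> L \<le> H k))"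
proof (cases "a < 1")
  case True
  have inc: "incseq F" using mono_lt1[OF True] by (intro incseq_SucI) (meson order_trans)
  obtain L' where L': "F \<longlonglongrightarrow> L'" "\<forall>i. F i \<le> L'"
    using incseq_convergent[OF inc, of 1] F_le1[OF True] by blast
  have LL: "L = L'" unfolding L_def using L'(1) by (simp add: limI)
  have FS: "(\<lambda>k. F (Suc k)) \<longlonglongrightarrow> L" using L'(1) LL by (simp add: LIMSEQ_Suc)
  have HL: "H \<longlonglongrightarrow> L"
    using mono_lt1[OF True] L'(1) FS LL by (intro tendsto_sandwich[of F H _ "\<lambda>k. F (Suc k)"]) auto
  have "0 < L" using F0_pos L'(2) LL by (metis order.strict_trans2)
  moreover have "\<forall>k. F k \<le> L \<and> H k \<le> L" using L'(2) LL mono_lt1[OF True] by (meson order_trans)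
  ultimately show ?thesis using L' LL HL True by auto
next
  case False
  hence gt: "1 < a" using a_ne by simp
  have dec: "decseq F" using mono_gt1[OF gt] by (intro decseq_SucI) (meson order_trans)
  obtain L' where L': "F \<longlonglongrightarrow> L'" "\<forall>i. L' \<le> F i"
    using decseq_convergent[OF dec, of 1] F_ge1[OF gt] by blast
  have LL: "L = L'" unfolding L_def using L'(1) by (simp add: limI)
  have FS: "(\<lambda>k. F (Suc k)) \<longlonglongrightarrow> L" using L'(1) LL by (simp add: LIMSEQ_Suc)
  have HL: "H \<longlonglongrightarrow> L"
    using mono_gt1[OF gt] L'(1) FS LL by (intro tendsto_sandwich[of "\<lambda>k. F (Suc k)" H _ F]) auto
  have "1 \<le> L" using F_ge1[OF gt] L'(1) LL by (metis LIMSEQ_le_const)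
  moreover have "\<forall>k. L \<le> F k \<and> L \<le> H k" using L'(2) LL mono_gt1[OF gt] by (meson order_trans)
  ultimately show ?thesis using L' LL HL False by auto
qed

lemma F_lim: "F \<longlonglongrightarrow> L" using conv by blast
lemma H_lim: "H \<longlonglongrightarrow> L" using conv by blast
lemma L_pos: "0 < L" using conv by blast

end


lemma sum_qY_star_le1: "(\<Sum>y\<in>UNIV. qY_star a p u y) \<le> 1"
proof (cases "ZY a p u = 0")
  case True thus ?thesis by (simp add: qY_star_eq)
next
  case False thus ?thesis using sum_qY_star[OF False] by simp
qed
lemma sum_qX_star_le1: "(\<Sum>x\<in>UNIV. qX_star a p v x) \<le> 1"
proof (cases "ZX a p v = 0")
  case True thus ?thesis by (simp add: qX_star_eq)
next
  case False thus ?thesis using sum_qX_star[OF False] by simp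
qed

lemma GY_ge: assumes "0 < a" "a \<le> 1" "\<And>y. 0 \<le> v y" "(\<Sum>y\<in>UNIV. v y) \<le> 1"
  shows "FF a p u v \<le> ZY a p u powr a"
proof -
  have "rho a (qY_star a p u) v \<le> 1"
    using assms by (intro rho_le1) (auto simp: qY_star_nonneg sum_qY_star_le1)
  thus ?thesis using ident_Y[of a p u v] assms(1) by (simp add: mult_left_le)
qed

lemma HX_ge: assumes "0 < a" "a \<le> 1" "\<And>x. 0 \<le> u x" "(\<Sum>x\<in>UNIV. u x) \<le> 1"
  shows "FF a p u v \<le> ZX a p v powr a"
proof -
  have "rho a (qX_star a p v) u \<le> 1"
    using assms by (intro rho_le1) (auto simp: qX_star_nonneg sum_qX_star_le1)
  thus ?thesis using ident_X[of a p u v] assms(1) by (simp add: mult_left_le)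
qed

context LPalg
begin

lemma rho_sym: assumes "a = 1/2" shows "rho a f g = rho a g f"
proof -
  have e: "1 - a = a" using assms by simp
  show ?thesis unfolding rho_def e by (simp add: mult.commute)
qed

definition sm where "sm v = qY_star a p (qX_star a p v)"

lemma half_step:
  assumes half: "a = 1/2" and c: "0 < c" and v: "is_dist v" and cv: "c \<le> ZX a p v powr a"
  shows "c\<^sup>2 * rho a (sm v) (qY (Suc k)) \<le> L\<^sup>2 * rho a v (qY (Suc (Suc k)))"
    and "is_dist (sm v)" and "c \<le> ZX a p (sm v) powr a"
proof -
  define us where "us = qX_star a p v"
  have a1: "a \<le> 1" using half by simp
  have vnn: "\<And>y. 0 \<le> v y" and vs: "(\<Sum>y\<in>UNIV. v y) = 1" using v by (auto simp: is_dist_def)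
  have e1: "FF a p (qX (Suc (Suc k))) v = F (Suc (Suc k)) * rho a (qY (Suc (Suc k))) v"
    using ident_Y[OF a_nz, of p "qX (Suc (Suc k))" v] F_Suc sY by metis
  have e2: "FF a p (qX (Suc (Suc k))) v = ZX a p v powr a * rho a us (qX (Suc (Suc k)))"
    using ident_X[OF a_nz] us_def by metis
  have e3: "FF a p us (qY (Suc k)) = H (Suc k) * rho a (qX (Suc (Suc k))) us"
    using ident_X[OF a_nz, of p us "qY (Suc k)"] H_eq sX by metis
  have e4: "FF a p us (qY (Suc k)) = ZY a p us powr a * rho a (sm v) (qY (Suc k))"
    using ident_Y[OF a_nz] us_def sm_def by metis
  have GH0: "FF a p us v \<le> ZY a p us powr a"
    by (rule GY_ge[OF a_pos a1 vnn]) (use vs in simp)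
  have GH: "ZX a p v powr a \<le> ZY a p us powr a"
    using GH0 FF_qX_star[OF a_nz, of p v] us_def by simp
  have cG: "c \<le> ZY a p us powr a" using cv GH by linarith
  have rsym: "rho a us (qX (Suc (Suc k))) = rho a (qX (Suc (Suc k))) us" using rho_sym[OF half] .
  have r1: "0 \<le> rho a (qY (Suc (Suc k))) v" by (simp add: rho_def sum_nonneg)
  have r2: "0 \<le> rho a (sm v) (qY (Suc k))" by (simp add: rho_def sum_nonneg)
  have key: "F (Suc (Suc k)) * H (Suc k) * rho a (qY (Suc (Suc k))) v =
     ZX a p v powr a * ZY a p us powr a * rho a (sm v) (qY (Suc k))"
    using e1 e2 e3 e4 rsym by (metis mult.commute mult.left_commute)
  have "c\<^sup>2 * rho a (sm v) (qY (Suc k)) \<le> ZX a p v powr a * ZY a p us powr a * rho a (sm v) (qY (Suc k))"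
    using cv cG c r2 by (simp add: power2_eq_square mult_mono mult_right_mono)
  also have "\<dots> = F (Suc (Suc k)) * H (Suc k) * rho a (qY (Suc (Suc k))) v" using key by simp
  also have "\<dots> \<le> L * L * rho a (qY (Suc (Suc k))) v"
    using conv a1 a_ne F_nonneg H_nonneg r1 by (intro mult_right_mono mult_mono) auto
  finally show "c\<^sup>2 * rho a (sm v) (qY (Suc k)) \<le> L\<^sup>2 * rho a v (qY (Suc (Suc k)))"
    using rho_sym[OF half, of "qY (Suc (Suc k))" v] by (simp add: power2_eq_square)
  have Zus: "ZY a p us \<noteq> 0" using cG c by auto
  thus "is_dist (sm v)" unfolding sm_def us_def by (rule dist_qY_star)
  have Zv: "ZX a p v \<noteq> 0" using cv c by auto
  have usd: "is_dist us" unfolding us_def using Zv by (rule dist_qX_star)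
  have "FF a p us (sm v) \<le> ZX a p (sm v) powr a"
    using usd a_pos a1 by (intro HX_ge) (auto simp: is_dist_def)
  moreover have "FF a p us (sm v) = ZY a p us powr a" unfolding sm_def us_def by (rule FF_qY_star[OF a_nz])
  ultimately show "c \<le> ZX a p (sm v) powr a" using cG by linarith
qed

lemma half_iter:
  assumes half: "a = 1/2" and c: "0 < c"
  shows "is_dist v \<Longrightarrow> c \<le> ZX a p v powr a \<Longrightarrow>
     (c\<^sup>2)^N * rho a ((sm ^^ N) v) (qY (Suc 0)) \<le> (L\<^sup>2)^N * rho a v (qY (Suc N))
     \<and> is_dist ((sm ^^ N) v) \<and> c \<le> ZX a p ((sm ^^ N) v) powr a"
proof (induction N arbitrary: v)
  case 0 thus ?case by simp
next
  case (Suc N)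
  note st = half_step[OF half c Suc.prems]
  have IH: "(c\<^sup>2)^N * rho a ((sm ^^ N) (sm v)) (qY (Suc 0)) \<le> (L\<^sup>2)^N * rho a (sm v) (qY (Suc N))"
    "is_dist ((sm ^^ N) (sm v))" "c \<le> ZX a p ((sm ^^ N) (sm v)) powr a"
    using Suc.IH[OF st(2) st(3)] by auto
  have eq: "(sm ^^ Suc N) v = (sm ^^ N) (sm v)" by (simp add: funpow_swap1)
  have "(c\<^sup>2)^(Suc N) * rho a ((sm ^^ Suc N) v) (qY (Suc 0)) = c\<^sup>2 * ((c\<^sup>2)^N * rho a ((sm ^^ N) (sm v)) (qY (Suc 0)))"
    using eq by simp
  also have "\<dots> \<le> c\<^sup>2 * ((L\<^sup>2)^N * rho a (sm v) (qY (Suc N)))"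
    using IH(1) by (intro mult_left_mono) auto
  also have "\<dots> = (L\<^sup>2)^N * (c\<^sup>2 * rho a (sm v) (qY (Suc N)))" by simp
  also have "\<dots> \<le> (L\<^sup>2)^N * (L\<^sup>2 * rho a v (qY (Suc (Suc N))))"
    using st(1)[of N] by (intro mult_left_mono) auto
  also have "\<dots> = (L\<^sup>2)^(Suc N) * rho a v (qY (Suc (Suc N)))" by simp
  finally show ?case using IH(2,3) eq by simp
qed

definition SY where "SY = {y. \<exists>x. 0 < p (x, y)}"
definition mu where "mu = Min ((\<lambda>y. qY (Suc 0) y powr (1 - a)) ` SY)"

lemma mu_pos: "0 < mu"
proof -
  have "SY \<noteq> {}" using p_ex by (auto simp: SY_def)
  moreover have "\<forall>y\<in>SY. 0 < qY (Suc 0) y powr (1 - a)"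
    by (auto simp: SY_def dest: posY[where k="Suc 0"])
  ultimately show ?thesis unfolding mu_def by (subst Min_gr_iff) (auto simp: SY_def)
qed

lemma mu_le: assumes "a \<le> 1" "ZY a p u \<noteq> 0" shows "mu \<le> rho a (qY_star a p u) (qY (Suc 0))"
proof -
  have "(\<Sum>y\<in>UNIV. qY_star a p u y * mu) \<le> rho a (qY_star a p u) (qY (Suc 0))"
    unfolding rho_def
  proof (intro sum_mono)
    fix y
    show "qY_star a p u y * mu \<le> qY_star a p u y powr a * qY (Suc 0) y powr (1 - a)"
    proof (cases "qY_star a p u y = 0")
      case True thus ?thesis by simp
    next
      case False
      hence T: "0 < qY_star a p u y" using qY_star_nonneg[of a p u y] by simp
      hence "y \<in> SY" using qY_star_supp[OF T] p_nonneg by (auto simp: SY_def)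
      hence m: "mu \<le> qY (Suc 0) y powr (1 - a)" unfolding mu_def by (intro Min_le) auto
      have T1: "qY_star a p u y \<le> 1"
      proof -
        have "qY_star a p u y \<le> (\<Sum>y\<in>UNIV. qY_star a p u y)" by (rule member_le_sum) (auto simp: qY_star_nonneg)
        thus ?thesis using sum_qY_star_le1[of a p u] by linarith
      qed
      have "qY_star a p u y powr 1 \<le> qY_star a p u y powr a"
        using assms(1) T T1 by (intro powr_mono') auto
      hence "qY_star a p u y \<le> qY_star a p u y powr a" using T by simp
      thus ?thesis using m T mu_pos by (intro mult_mono) auto
    qed
  qed
  moreover have "(\<Sum>y\<in>UNIV. qY_star a p u y * mu) = mu"
    using sum_qY_star[OF assms(2)] by (simp flip: sum_distrib_right)
  ultimately show ?thesis by simp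
qed

lemma half_bound:
  assumes half: "a = 1/2" and v: "is_dist v"
  shows "ZX a p v powr a \<le> L"
proof (rule ccontr)
  assume "\<not> ?thesis"
  hence cL: "L < ZX a p v powr a" by simp
  define c where "c = ZX a p v powr a"
  have c: "0 < c" using cL L_pos c_def by linarith
  have a1: "a \<le> 1" using half by simp
  have bound: "(c\<^sup>2)^(Suc n) * mu \<le> (L\<^sup>2)^(Suc n)" for n
  proof -
    note it = half_iter[OF half c v, of n]
    have w: "is_dist ((sm ^^ n) v)" "c \<le> ZX a p ((sm ^^ n) v) powr a" using it c_def by auto
    note st = half_step[OF half c w]
    have Zne: "ZY a p (qX_star a p ((sm ^^ n) v)) \<noteq> 0"
    proof -
      have "ZX a p ((sm ^^ n) v) \<noteq> 0" using w(2) c by auto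
      hence ud: "is_dist (qX_star a p ((sm ^^ n) v))" by (rule dist_qX_star)
      have "FF a p (qX_star a p ((sm ^^ n) v)) ((sm ^^ n) v) \<le> ZY a p (qX_star a p ((sm ^^ n) v)) powr a"
        using w(1) a_pos a1 by (intro GY_ge) (auto simp: is_dist_def)
      moreover have "FF a p (qX_star a p ((sm ^^ n) v)) ((sm ^^ n) v) = ZX a p ((sm ^^ n) v) powr a"
        by (rule FF_qX_star[OF a_nz])
      ultimately have "c \<le> ZY a p (qX_star a p ((sm ^^ n) v)) powr a"
        using w(2) by linarith
      thus ?thesis using c by auto
    qed
    have "mu \<le> rho a ((sm ^^ Suc n) v) (qY (Suc 0))"
      using mu_le[OF a1 Zne] by (simp add: sm_def)
    have "(c\<^sup>2)^(Suc n) * mu \<le> (c\<^sup>2)^(Suc n) * rho a ((sm ^^ Suc n) v) (qY (Suc 0))"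
      using \<open>mu \<le> _\<close> by (intro mult_left_mono) auto
    also have "\<dots> \<le> (L\<^sup>2)^(Suc n) * rho a v (qY (Suc (Suc n)))"
      using half_iter[OF half c v, of "Suc n"] c_def by auto
    also have "\<dots> \<le> (L\<^sup>2)^(Suc n) * 1"
      using v distY a_pos a1 by (intro mult_left_mono rho_le1) (auto simp: is_dist_def)
    finally show ?thesis by simp
  qed
  define q where "q = c\<^sup>2 / L\<^sup>2"
  have q1: "1 < q" unfolding q_def using cL L_pos c_def
    by (simp add: power_strict_mono)
  obtain n where n: "1 / mu < q ^ n" using real_arch_pow[OF q1] by blast
  have "q ^ n \<le> q ^ Suc n" using q1 by (intro power_increasing) auto
  hence "1 / mu < q ^ Suc n" using n by linarith
  hence "1 < q ^ Suc n * mu" using mu_pos by (simp add: field_simps)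
  moreover have "q ^ Suc n * mu \<le> 1"
  proof -
    have Lp: "0 < (L\<^sup>2)^(Suc n)" using L_pos by simp
    have "q ^ Suc n * mu = (c\<^sup>2)^(Suc n) * mu / (L\<^sup>2)^(Suc n)"
      unfolding q_def by (simp add: power_divide)
    also have "\<dots> \<le> 1" using bound[of n] Lp by simp
    finally show ?thesis .
  qed
  ultimately show False by simp
qed

lemma half_M2: assumes half: "a = 1/2" and "is_dist u" "is_dist v" shows "FF a p u v \<le> L"
proof -
  have "FF a p u v \<le> ZX a p v powr a" using assms a_pos by (intro HX_ge) (auto simp: is_dist_def)
  thus ?thesis using half_bound[OF half assms(3)] by linarith
qed

end

lemma pw_scaled_lt1:
  fixes a s0 t0 s t :: real
  assumes "1/2 \<le> a" "a < 1" "0 < s0" "0 < t0" "0 \<le> s" "0 \<le> t"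
  shows "(s * t) powr (1 - a) \<le> (2*a - 1) * (s0 * t0) powr (1 - a)
     + (1 - a) * s * (s0 powr (1 - a) / s0) * t0 powr (1 - a)
     + (1 - a) * t * s0 powr (1 - a) * (t0 powr (1 - a) / t0)"
proof -
  define c where "c = 1 - a"
  have c: "0 < c" "c \<le> 1/2" using assms by (auto simp: c_def)
  have st: "s * t = (s0 * t0) * ((s / s0) * (t / t0))" using assms by (simp add: field_simps)
  have st2: "(s0 * t0) powr c * ((s / s0) * (t / t0)) powr c = ((s0 * t0) * ((s / s0) * (t / t0))) powr c"
    by (simp only: powr_mult)
  have "(s * t) powr c = (s0 * t0) powr c * ((s / s0) * (t / t0)) powr c"
    unfolding st2 by (simp only: st[symmetric])
  also have "\<dots> \<le> (s0 * t0) powr c * ((1 - 2*c) + c * (s / s0) + c * (t / t0))"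
    using assms c by (intro mult_left_mono pw_concave) auto
  also have "\<dots> = (2*a - 1) * (s0 * t0) powr c + c * s * (s0 powr c / s0) * t0 powr c
     + c * t * s0 powr c * (t0 powr c / t0)"
    using assms by (simp add: c_def powr_mult field_simps)
  finally show ?thesis by (simp add: c_def)
qed

lemma pw_scaled_gt1:
  fixes a s0 t0 s t :: real
  assumes "1 < a" "0 < s0" "0 < t0" "0 < s" "0 < t"
  shows "(2*a - 1) * (s0 * t0) powr (1 - a)
     + (1 - a) * s * (s0 powr (1 - a) / s0) * t0 powr (1 - a)
     + (1 - a) * t * s0 powr (1 - a) * (t0 powr (1 - a) / t0) \<le> (s * t) powr (1 - a)"
proof -
  define c where "c = 1 - a"
  have c: "c < 0" using assms by (auto simp: c_def)
  have st: "s * t = (s0 * t0) * ((s / s0) * (t / t0))" using assms by (simp add: field_simps)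
  have "(2*a - 1) * (s0 * t0) powr c + c * s * (s0 powr c / s0) * t0 powr c
     + c * t * s0 powr c * (t0 powr c / t0) = (s0 * t0) powr c * ((1 - 2*c) + c * (s / s0) + c * (t / t0))"
    using assms by (simp add: c_def powr_mult field_simps)
  also have "\<dots> \<le> (s0 * t0) powr c * ((s / s0) * (t / t0)) powr c"
    using assms c by (intro mult_left_mono pw_convex) auto
  also have "\<dots> = ((s0 * t0) * ((s / s0) * (t / t0))) powr c"
    by (simp only: powr_mult)
  also have "\<dots> = (s * t) powr c"
    by (simp only: st[symmetric])
  finally show ?thesis by (simp add: c_def)
qed

lemma psi_lt1:
  fixes a t :: real
  assumes "0 < a" "a < 1" "0 \<le> t"
  shows "t powr a - 1 - a * (t - 1) \<le> - (a * (1 - a)) * (sqrt t - 1)\<^sup>2"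
proof -
  define s where "s = sqrt t"
  have s: "0 \<le> s" "t = s\<^sup>2" using assms by (auto simp: s_def)
  have y: "s powr a * 1 powr (1 - a) \<le> a * s + (1 - a) * 1" using assms s by (intro young1) auto
  hence y': "s powr a \<le> a * s + (1 - a)" by simp
  have "t powr a = (s powr a)\<^sup>2"
    using s by (simp add: powr_powr power2_eq_square flip: powr_mult)
  also have "\<dots> \<le> (a * s + (1 - a))\<^sup>2" using y' assms s by (intro power_mono) auto
  finally have "t powr a \<le> (a * s + (1 - a))\<^sup>2" .
  thus ?thesis using s by (simp add: s_def[symmetric] power2_eq_square algebra_simps)
qed

lemma psi_gt1:
  fixes a t :: real
  assumes "1 < a" "0 \<le> t"
  shows "((a - 1) / a) * (sqrt t - 1)\<^sup>2 \<le> t powr a - 1 - a * (t - 1)"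
proof -
  define s where "s = sqrt t"
  have s: "0 \<le> s" "t = s\<^sup>2" using assms by (auto simp: s_def)
  have tp: "t powr a = (s powr a)\<^sup>2"
    using s by (simp add: powr_powr power2_eq_square flip: powr_mult)
  show ?thesis
  proof (cases "0 \<le> 1 + a * (s - 1)")
    case True
    have "a * s - (a - 1) * 1 \<le> s powr a * 1 powr (1 - a)"
      using young_rev[of a s 1] assms s by simp
    hence y: "1 + a * (s - 1) \<le> s powr a" by (simp add: algebra_simps)
    have "(1 + a * (s - 1))\<^sup>2 \<le> t powr a" unfolding tp using True y by (intro power_mono) auto
    moreover have "((a - 1) / a) * (s - 1)\<^sup>2 \<le> a * (a - 1) * (s - 1)\<^sup>2"
    proof (intro mult_right_mono)
      have "(a - 1) / a \<le> (a - 1)" using assms mult_left_le[of "1/a" "a-1"] by simp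
      also have "\<dots> \<le> a * (a - 1)" using assms mult_right_mono[of 1 a "a - 1"] by simp
      finally show "(a - 1) / a \<le> a * (a - 1)" .
    qed simp
    ultimately show ?thesis using s
      by (simp add: s_def[symmetric] power2_eq_square algebra_simps)
  next
    case False
    hence sb: "s < 1 - 1/a" using assms by (simp add: field_simps)
    hence s1: "s < 1" using assms by (smt (verit) divide_pos_pos)
    have "(s - 1)\<^sup>2 \<le> 1"
    proof -
      have "(1 - s)\<^sup>2 \<le> 1" using s s1 by (intro power_le_one) auto
      thus ?thesis by (simp add: power2_commute)
    qed
    hence "((a - 1) / a) * (s - 1)\<^sup>2 \<le> (a - 1) / a" using assms by (intro mult_left_le) auto
    moreover have "s\<^sup>2 \<le> (1 - 1/a)\<^sup>2" using s sb by (intro power_mono) auto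
    hence "(a - 1) / a \<le> - 1 - a * (t - 1)"
      using assms s(2) by (simp add: power2_eq_square field_simps)
    moreover have "0 \<le> t powr a" by simp
    ultimately show ?thesis unfolding s_def[symmetric] by linarith
  qed
qed


lemma fac01: "0 \<le> (z::real) \<Longrightarrow> z powr (1 - a) / z * z powr a = (if z = 0 then 0 else 1)"
proof -
  assume z: "0 \<le> z"
  have "z powr (1 - a) * z powr a = z powr ((1 - a) + a)" by (rule powr_add[symmetric])
  hence "z powr (1 - a) * z powr a = z powr 1" by simp
  thus ?thesis using z by auto
qed

context LPalg
begin

definition Sx where "Sx k us = (\<Sum>x\<in>UNIV. us x * (qX (Suc k) x powr (1 - a) / qX (Suc k) x) * qX (Suc k) x powr a)"
definition R where "R k vs = (\<Sum>y\<in>UNIV. vs y * (qY k y powr (1 - a) / qY k y) * qY (Suc k) y powr a)"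

lemma Sx_le: assumes "\<And>x. 0 \<le> us x" "(\<Sum>x\<in>UNIV. us x) \<le> 1" shows "Sx k us \<le> 1" "0 \<le> Sx k us"
proof -
  have "Sx k us = (\<Sum>x\<in>UNIV. us x * (if qX (Suc k) x = 0 then 0 else 1))"
    unfolding Sx_def
  proof (intro sum.cong refl)
    fix x
    show "us x * (qX (Suc k) x powr (1 - a) / qX (Suc k) x) * qX (Suc k) x powr a =
          us x * (if qX (Suc k) x = 0 then 0 else 1)"
      using fac01[OF nnX, of "Suc k" x a] by (simp only: mult.assoc)
  qed
  moreover have "(\<Sum>x\<in>UNIV. us x * (if qX (Suc k) x = 0 then 0 else 1)) \<le> (\<Sum>x\<in>UNIV. us x)"
    using assms by (intro sum_mono) auto
  moreover have "0 \<le> (\<Sum>x\<in>UNIV. us x * (if qX (Suc k) x = 0 then 0 else 1))"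
    using assms by (intro sum_nonneg) auto
  ultimately show "Sx k us \<le> 1" "0 \<le> Sx k us" using assms by auto
qed

definition G3 where "G3 k us vs x y = (2*a - 1) * (qX (Suc k) x * qY k y) powr (1 - a)
     + (1 - a) * us x * (qX (Suc k) x powr (1 - a) / qX (Suc k) x) * qY k y powr (1 - a)
     + (1 - a) * vs y * qX (Suc k) x powr (1 - a) * (qY k y powr (1 - a) / qY k y)"

lemma sum_G3: "(\<Sum>x\<in>UNIV. \<Sum>y\<in>UNIV. p (x, y) powr a * G3 k us vs x y) =
   (2*a - 1) * H k + (1 - a) * H k * Sx k us + (1 - a) * F (Suc k) * R k vs"
proof -
  define u where "u = qX (Suc k)"
  define v where "v = qY k"
  define cc where "cc x = u x powr (1 - a) / u x" for x
  define dd where "dd y = v y powr (1 - a) / v y" for y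
  have s1: "(\<Sum>x\<in>UNIV. \<Sum>y\<in>UNIV. p (x, y) powr a * ((2*a - 1) * (u x * v y) powr (1 - a)))
      = (2*a - 1) * FF a p u v"
    unfolding FF_def by (simp add: sum_distrib_left algebra_simps)
  have s2: "(\<Sum>x\<in>UNIV. \<Sum>y\<in>UNIV. p (x, y) powr a * ((1 - a) * us x * cc x * v y powr (1 - a)))
      = (1 - a) * (\<Sum>x\<in>UNIV. us x * cc x * AX a p v x)"
    unfolding AX_def by (simp add: sum_distrib_left mult.assoc mult.left_commute)
  have s3: "(\<Sum>x\<in>UNIV. \<Sum>y\<in>UNIV. p (x, y) powr a * ((1 - a) * vs y * u x powr (1 - a) * dd y))
      = (1 - a) * (\<Sum>y\<in>UNIV. vs y * dd y * BY a p u y)"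
    unfolding BY_def by (subst sum.swap) (simp add: sum_distrib_left mult_ac)
  have AXe: "AX a p v x = H k * u x powr a" for x
    unfolding u_def v_def H_eq using AX_eq[OF a_nz] sX by metis
  have BYe: "BY a p u y = F (Suc k) * qY (Suc k) y powr a" for y
    unfolding u_def F_Suc using BY_eq[OF a_nz] sY by metis
  have "(\<Sum>x\<in>UNIV. \<Sum>y\<in>UNIV. p (x, y) powr a * G3 k us vs x y) =
     (\<Sum>x\<in>UNIV. \<Sum>y\<in>UNIV. p (x, y) powr a * ((2*a - 1) * (u x * v y) powr (1 - a)))
   + (\<Sum>x\<in>UNIV. \<Sum>y\<in>UNIV. p (x, y) powr a * ((1 - a) * us x * cc x * v y powr (1 - a)))
   + (\<Sum>x\<in>UNIV. \<Sum>y\<in>UNIV. p (x, y) powr a * ((1 - a) * vs y * u x powr (1 - a) * dd y))"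
    unfolding G3_def u_def v_def cc_def dd_def by (simp add: distrib_left sum.distrib)
  also have "\<dots> = (2*a - 1) * FF a p u v + (1 - a) * (\<Sum>x\<in>UNIV. us x * cc x * AX a p v x)
     + (1 - a) * (\<Sum>y\<in>UNIV. vs y * dd y * BY a p u y)"
    using s1 s2 s3 H_def u_def v_def by simp
  also have "\<dots> = (2*a - 1) * H k + (1 - a) * H k * Sx k us + (1 - a) * F (Suc k) * R k vs"
    unfolding AXe BYe unfolding Sx_def R_def u_def v_def cc_def dd_def
    by (simp add: sum_distrib_left mult_ac H_def)
  finally show ?thesis .
qed

lemma main_ineq_lt1:
  assumes lt: "a < 1" and us: "is_dist us" and vs: "is_dist vs"
  shows "FF a p us vs \<le> a * H k + (1 - a) * F (Suc k) * R k vs"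
proof -
  have usn: "\<And>x. 0 \<le> us x" and vsn: "\<And>y. 0 \<le> vs y" using us vs by (auto simp: is_dist_def)
  have "FF a p us vs \<le> (\<Sum>x\<in>UNIV. \<Sum>y\<in>UNIV. p (x, y) powr a * G3 k us vs x y)"
    unfolding FF_def
  proof (intro sum_mono)
    fix x y
    show "p (x, y) powr a * (us x * vs y) powr (1 - a) \<le> p (x, y) powr a * G3 k us vs x y"
    proof (cases "0 < p (x, y)")
      case True
      show ?thesis unfolding G3_def
        using a_ge lt posX[OF True, of "Suc k"] posY[OF True, of k] usn[of x] vsn[of y]
        by (intro mult_left_mono pw_scaled_lt1) auto
    next
      case False
      hence "p (x, y) = 0" using p_nonneg[of "(x, y)"] by simp
      thus ?thesis by simp
    qed
  qed
  also have "\<dots> = (2*a - 1) * H k + (1 - a) * H k * Sx k us + (1 - a) * F (Suc k) * R k vs"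
    by (rule sum_G3)
  also have "\<dots> \<le> (2*a - 1) * H k + (1 - a) * H k * 1 + (1 - a) * F (Suc k) * R k vs"
  proof -
    have "(1 - a) * H k * Sx k us \<le> (1 - a) * H k * 1"
      using Sx_le[of us k] usn us lt H_nonneg[of k] by (intro mult_left_mono) (auto simp: is_dist_def)
    thus ?thesis by simp
  qed
  finally show ?thesis by (simp add: algebra_simps)
qed

lemma main_ineq_gt1:
  assumes gt: "1 < a" and us: "is_dist us" and vs: "is_dist vs"
    and pos: "\<And>x y. 0 < p (x, y) \<Longrightarrow> 0 < us x \<and> 0 < vs y"
  shows "a * H k + (1 - a) * F (Suc k) * R k vs \<le> FF a p us vs"
proof -
  have usn: "\<And>x. 0 \<le> us x" and vsn: "\<And>y. 0 \<le> vs y" using us vs by (auto simp: is_dist_def)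
  have "a * H k + (1 - a) * F (Suc k) * R k vs = (2*a - 1) * H k + (1 - a) * H k * 1 + (1 - a) * F (Suc k) * R k vs"
    by (simp add: algebra_simps)
  also have "\<dots> \<le> (2*a - 1) * H k + (1 - a) * H k * Sx k us + (1 - a) * F (Suc k) * R k vs"
  proof -
    have "(1 - a) * H k * 1 \<le> (1 - a) * H k * Sx k us"
    proof -
      have "(1 - a) * H k \<le> 0" using gt H_nonneg[of k] by (simp add: mult_nonpos_nonneg)
      thus ?thesis using Sx_le[of us k] usn us by (intro mult_left_mono_neg) (auto simp: is_dist_def)
    qed
    thus ?thesis by simp
  qed
  also have "\<dots> = (\<Sum>x\<in>UNIV. \<Sum>y\<in>UNIV. p (x, y) powr a * G3 k us vs x y)"
    by (rule sum_G3[symmetric])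
  also have "\<dots> \<le> FF a p us vs"
    unfolding FF_def
  proof (intro sum_mono)
    fix x y
    show "p (x, y) powr a * G3 k us vs x y \<le> p (x, y) powr a * (us x * vs y) powr (1 - a)"
    proof (cases "0 < p (x, y)")
      case True
      show ?thesis unfolding G3_def
        using gt posX[OF True, of "Suc k"] posY[OF True, of k] pos[OF True]
        by (intro mult_left_mono pw_scaled_gt1) auto
    next
      case False
      hence "p (x, y) = 0" using p_nonneg[of "(x, y)"] by simp
      thus ?thesis by simp
    qed
  qed
  finally show ?thesis .
qed

end

context LPalg
begin

lemma F_pos: "0 < F k"
  using p_ex posX posY unfolding F_def by (metis FF_pos)

lemma F_dec: assumes "1 < a" shows "F k \<le> F 0"
proof (induction k)
  case (Suc k) thus ?case using mono_gt1[OF assms, of k] by linarith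
qed simp

lemma term_le_FF: "p (x, y) powr a * (u x * v y) powr (1 - a) \<le> FF a p u v"
proof -
  have "p (x, y) powr a * (u x * v y) powr (1 - a) \<le> (\<Sum>y\<in>UNIV. p (x, y) powr a * (u x * v y) powr (1 - a))"
    by (rule member_le_sum[where f = "\<lambda>y. p (x, y) powr a * (u x * v y) powr (1 - a)"]) auto
  also have "\<dots> \<le> FF a p u v" unfolding FF_def
    by (rule member_le_sum[where f = "\<lambda>x. \<Sum>y\<in>UNIV. p (x, y) powr a * (u x * v y) powr (1 - a)"])
       (auto intro: sum_nonneg)
  finally show ?thesis .
qed

lemma lb_gt1: assumes gt: "1 < a" and pxy: "0 < p (x, y)" shows "\<exists>\<delta>>0. \<forall>k. \<delta> \<le> qY (Suc k) y"
proof -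
  define M where "M = F 0 / p (x, y) powr a"
  have M: "0 < M" unfolding M_def using F_pos pxy by simp
  define \<delta> where "\<delta> = M powr (1 / (1 - a))"
  have "\<delta> \<le> qY k y" for k
  proof -
    define u where "u = qX k x"
    define v where "v = qY k y"
    have u: "0 < u" "u \<le> 1" using posX[OF pxy] le1X unfolding u_def by auto
    have v: "0 < v" using posY[OF pxy] unfolding v_def by auto
    have u1: "1 \<le> u powr (1 - a)" using u gt powr_mono2'[of "1 - a" u 1] by simp
    have "p (x, y) powr a * v powr (1 - a) \<le> p (x, y) powr a * (u powr (1 - a) * v powr (1 - a))"
      using u1 by (intro mult_left_mono) (auto intro: mult_left_le_one_le[THEN order.trans] simp: mult_le_cancel_right1)
    also have "\<dots> = p (x, y) powr a * (u * v) powr (1 - a)" by (simp add: powr_mult)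
    also have "\<dots> \<le> F k" unfolding F_def u_def v_def by (rule term_le_FF)
    also have "\<dots> \<le> F 0" using F_dec[OF gt] .
    finally have "v powr (1 - a) \<le> M" unfolding M_def using pxy by (simp add: field_simps)
    hence "M powr (1 / (1 - a)) \<le> (v powr (1 - a)) powr (1 / (1 - a))"
      using gt v by (intro powr_mono2') auto
    also have "\<dots> = v" using gt v by (simp add: powr_powr)
    finally show ?thesis unfolding \<delta>_def v_def .
  qed
  moreover have "0 < \<delta>" unfolding \<delta>_def using M by simp
  ultimately show ?thesis by blast
qed

lemma Z_le1: assumes "0 < z" "z powr a \<le> 1" shows "z \<le> 1"
proof (rule ccontr)
  assume "\<not> z \<le> 1"
  hence "1 powr a < z powr a" using a_pos by (intro powr_less_mono2) auto
  thus False using assms by simp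
qed

lemma stepX_lb: assumes lt: "a < 1" and pxy: "0 < p (x, y)"
  shows "p (x, y) * qY k y powr ((1 - a) / a) \<le> qX (Suc k) x"
proof -
  have Zp: "0 < ZX a p (qY k)" using pxy posY by (intro ZX_pos AX_pos) auto
  have "ZX a p (qY k) powr a \<le> 1" using H_eq mono_lt1[OF lt] F_le1[OF lt] by (metis order_trans)
  hence Z1: "ZX a p (qY k) \<le> 1" using Zp Z_le1 by blast
  have "p (x, y) powr a * qY k y powr (1 - a) \<le> AX a p (qY k) x" unfolding AX_def
    by (rule member_le_sum[where f = "\<lambda>y. p (x, y) powr a * qY k y powr (1 - a)"]) auto
  hence "(p (x, y) powr a * qY k y powr (1 - a)) powr (1/a) \<le> AX a p (qY k) x powr (1/a)"
    using a_pos by (intro powr_mono2) auto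
  moreover have "(p (x, y) powr a * qY k y powr (1 - a)) powr (1/a) = p (x, y) * qY k y powr ((1 - a) / a)"
    using a_pos pxy by (simp add: powr_mult powr_powr)
  moreover have "AX a p (qY k) x powr (1/a) \<le> AX a p (qY k) x powr (1/a) / ZX a p (qY k)"
    using Zp Z1 by (simp add: le_divide_eq mult_left_le)
  ultimately show ?thesis using sX by (simp add: qX_star_eq)
qed

lemma stepY_lb: assumes lt: "a < 1" and pxy: "0 < p (x, y)"
  shows "p (x, y) * qX (Suc k) x powr ((1 - a) / a) \<le> qY (Suc k) y"
proof -
  have Zp: "0 < ZY a p (qX (Suc k))" using pxy posX by (intro ZY_pos BY_pos) auto
  have "ZY a p (qX (Suc k)) powr a \<le> 1" using F_Suc F_le1[OF lt] by metis
  hence Z1: "ZY a p (qX (Suc k)) \<le> 1" using Zp Z_le1 by blast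
  have "p (x, y) powr a * qX (Suc k) x powr (1 - a) \<le> BY a p (qX (Suc k)) y" unfolding BY_def
    by (rule member_le_sum[where f = "\<lambda>x. p (x, y) powr a * qX (Suc k) x powr (1 - a)"]) auto
  hence "(p (x, y) powr a * qX (Suc k) x powr (1 - a)) powr (1/a) \<le> BY a p (qX (Suc k)) y powr (1/a)"
    using a_pos by (intro powr_mono2) auto
  moreover have "(p (x, y) powr a * qX (Suc k) x powr (1 - a)) powr (1/a) = p (x, y) * qX (Suc k) x powr ((1 - a) / a)"
    using a_pos pxy by (simp add: powr_mult powr_powr)
  moreover have "BY a p (qX (Suc k)) y powr (1/a) \<le> BY a p (qX (Suc k)) y powr (1/a) / ZY a p (qX (Suc k))"
    using Zp Z1 by (simp add: le_divide_eq mult_left_le)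
  ultimately show ?thesis using sY by (simp add: qY_star_eq)
qed

lemma lb_lt1: assumes lt: "a < 1" and gh: "1/2 < a" and pxy: "0 < p (x, y)"
  shows "\<exists>\<delta>>0. \<forall>k. \<delta> \<le> qY (Suc k) y"
proof -
  define P where "P = p (x, y)"
  define g where "g = (1 - a) / a"
  have g: "0 < g" "g < 1" using lt gh a_pos by (auto simp: g_def field_simps)
  have P: "0 < P" using pxy P_def by simp
  define \<delta> where "\<delta> = min (P powr (1 / (1 - g))) (P * qY 0 y powr g)"
  have d0: "0 < \<delta>" unfolding \<delta>_def using P posY[OF pxy, of 0] by simp
  have dd: "\<delta> \<le> P * \<delta> powr g"
  proof -
    have "\<delta> powr (1 - g) \<le> (P powr (1 / (1 - g))) powr (1 - g)"
      using d0 g by (intro powr_mono2) (auto simp: \<delta>_def)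
    also have "\<dots> = P" using g P by (simp add: powr_powr)
    finally have h: "\<delta> powr (1 - g) \<le> P" .
    have "\<delta> = \<delta> powr (1 - g) * \<delta> powr g" using d0 by (simp flip: powr_add)
    also have "\<dots> \<le> P * \<delta> powr g" using h by (intro mult_right_mono) auto
    finally show ?thesis .
  qed
  have mono: "P * \<delta> powr g \<le> P * z powr g" if "\<delta> \<le> z" for z
    using that d0 g P by (intro mult_left_mono powr_mono2) auto
  have "\<delta> \<le> qX (Suc k) x \<and> \<delta> \<le> qY (Suc k) y" for k
  proof (induction k)
    case 0
    have X: "\<delta> \<le> qX (Suc 0) x"
      using stepX_lb[OF lt pxy, of 0] unfolding P_def[symmetric] g_def[symmetric] \<delta>_def by linarith
    have "\<delta> \<le> qY (Suc 0) y"
      using stepY_lb[OF lt pxy, of 0] mono[OF X] dd unfolding P_def[symmetric] g_def[symmetric] by linarith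
    thus ?case using X by simp
  next
    case (Suc k)
    have X: "\<delta> \<le> qX (Suc (Suc k)) x"
      using stepX_lb[OF lt pxy, of "Suc k"] mono[of "qY (Suc k) y"] Suc dd
      unfolding P_def[symmetric] g_def[symmetric] by linarith
    have "\<delta> \<le> qY (Suc (Suc k)) y"
      using stepY_lb[OF lt pxy, of "Suc k"] mono[OF X] dd unfolding P_def[symmetric] g_def[symmetric] by linarith
    thus ?case using X by simp
  qed
  thus ?thesis using d0 by blast
qed

end

context LPalg
begin

definition ee where "ee k y = qY (Suc k) y powr a * qY k y powr (1 - a) - qY k y - a * (qY (Suc k) y - qY k y)"

lemma sum_ee: "(\<Sum>y\<in>UNIV. ee k y) = rho a (qY (Suc k)) (qY k) - 1"
proof -
  have "(\<Sum>y\<in>UNIV. ee k y) = rho a (qY (Suc k)) (qY k) - (\<Sum>y\<in>UNIV. qY k y)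
        - a * ((\<Sum>y\<in>UNIV. qY (Suc k) y) - (\<Sum>y\<in>UNIV. qY k y))"
    unfolding ee_def rho_def by (simp add: sum_subtractf sum_distrib_left right_diff_distrib)
  thus ?thesis using distY[of k] distY[of "Suc k"] by (simp add: is_dist_def)
qed

lemma rho_lim: "(\<lambda>k. rho a (qY (Suc k)) (qY k)) \<longlonglongrightarrow> 1"
proof -
  have eq: "rho a (qY (Suc k)) (qY k) = H k / F (Suc k)" for k
    using H_F[of k] F_pos[of "Suc k"] by simp
  have "(\<lambda>k. H k / F (Suc k)) \<longlonglongrightarrow> L / L"
    using H_lim LIMSEQ_Suc[OF F_lim] L_pos by (intro tendsto_divide) auto
  thus ?thesis using L_pos eq by simp
qed

lemma ee_sign: "(a < 1 \<longrightarrow> ee k y \<le> 0) \<and> (1 < a \<longrightarrow> 0 \<le> ee k y)"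
proof (intro conjI impI)
  assume lt: "a < 1"
  have "qY (Suc k) y powr a * qY k y powr (1 - a) \<le> a * qY (Suc k) y + (1 - a) * qY k y"
    using lt a_pos nnY by (intro young1) auto
  thus "ee k y \<le> 0" unfolding ee_def by (simp add: algebra_simps)
next
  assume gt: "1 < a"
  show "0 \<le> ee k y"
  proof (cases "qY k y = 0")
    case True
    have "qY (Suc k) y = 0"
    proof (rule ccontr)
      assume "qY (Suc k) y \<noteq> 0"
      hence "0 < qY (Suc k) y" using nnY[of "Suc k" y] by simp
      then obtain x where "0 < p (x, y)" using suppY by blast
      thus False using posY[of x y k] True by simp
    qed
    thus ?thesis using True unfolding ee_def by simp
  next
    case False
    hence "0 < qY k y" using nnY[of k y] by simp
    hence "a * qY (Suc k) y - (a - 1) * qY k y \<le> qY (Suc k) y powr a * qY k y powr (1 - a)"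
      using gt nnY by (intro young_rev) auto
    thus ?thesis unfolding ee_def by (simp add: algebra_simps)
  qed
qed

lemma ee_lim: "(\<lambda>k. ee k y) \<longlonglongrightarrow> 0"
proof (rule Lim_null_comparison)
  show "(\<lambda>k. \<bar>rho a (qY (Suc k)) (qY k) - 1\<bar>) \<longlonglongrightarrow> 0"
    using rho_lim by (intro tendsto_rabs_zero) (simp add: LIM_zero)
  show "\<forall>\<^sub>F k in sequentially. norm (ee k y) \<le> \<bar>rho a (qY (Suc k)) (qY k) - 1\<bar>"
  proof (intro always_eventually allI)
    fix k
    show "norm (ee k y) \<le> \<bar>rho a (qY (Suc k)) (qY k) - 1\<bar>"
    proof (cases "a < 1")
      case True
      have "- ee k y \<le> (\<Sum>y\<in>UNIV. - ee k y)"
        using ee_sign True by (intro member_le_sum) auto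
      moreover have "ee k y \<le> 0" using ee_sign True by auto
      ultimately show ?thesis using sum_ee[of k] by (simp add: sum_negf)
    next
      case False
      hence gt: "1 < a" using a_ne by simp
      have "ee k y \<le> (\<Sum>y\<in>UNIV. ee k y)"
        using ee_sign gt by (intro member_le_sum) auto
      moreover have "0 \<le> ee k y" using ee_sign gt by auto
      ultimately show ?thesis using sum_ee[of k] by simp
    qed
  qed
qed

lemma ratio_conv: assumes d: "0 < \<delta>" "\<forall>k. \<delta> \<le> qY (Suc k) y"
  shows "(\<lambda>k. (qY (Suc k) y / qY k y) powr a) \<longlonglongrightarrow> 1"
proof -
  define t where "t k = qY (Suc (Suc k)) y / qY (Suc k) y" for k
  define c where "c = (if a < 1 then a * (1 - a) else (a - 1) / a)"
  have c: "0 < c" unfolding c_def using a_pos a_ne by auto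
  have t0: "0 \<le> t k" for k unfolding t_def using nnY by simp
  have eeq: "ee (Suc k) y = qY (Suc k) y * (t k powr a - 1 - a * (t k - 1))" for k
  proof -
    have v: "0 < qY (Suc k) y" using d by (metis order.strict_trans2)
    have e1: "qY (Suc (Suc k)) y = t k * qY (Suc k) y" unfolding t_def using v by simp
    have "qY (Suc (Suc k)) y powr a * qY (Suc k) y powr (1 - a) = t k powr a * (qY (Suc k) y powr a * qY (Suc k) y powr (1 - a))"
      unfolding e1 by (simp add: powr_mult)
    also have "qY (Suc k) y powr a * qY (Suc k) y powr (1 - a) = qY (Suc k) y powr (a + (1 - a))"
      by (rule powr_add[symmetric])
    also have "\<dots> = qY (Suc k) y" using v by simp
    finally show ?thesis unfolding ee_def e1 by (simp add: algebra_simps)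
  qed
  have bnd: "(sqrt (t k) - 1)\<^sup>2 \<le> \<bar>ee (Suc k) y\<bar> / (c * \<delta>)" for k
  proof -
    have v: "\<delta> \<le> qY (Suc k) y" using d by simp
    have ps: "c * (sqrt (t k) - 1)\<^sup>2 \<le> \<bar>t k powr a - 1 - a * (t k - 1)\<bar>"
    proof (cases "a < 1")
      case True
      thus ?thesis using psi_lt1[OF a_pos True t0[of k]] c_def by simp
    next
      case False
      hence gt: "1 < a" using a_ne by simp
      thus ?thesis using psi_gt1[OF gt t0[of k]] c_def by simp
    qed
    have "c * \<delta> * (sqrt (t k) - 1)\<^sup>2 \<le> qY (Suc k) y * (c * (sqrt (t k) - 1)\<^sup>2)"
      using v c d by (simp add: mult.commute mult.left_commute mult_right_mono)
    also have "\<dots> \<le> qY (Suc k) y * \<bar>t k powr a - 1 - a * (t k - 1)\<bar>"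
      using ps nnY by (intro mult_left_mono) auto
    also have "\<dots> = \<bar>ee (Suc k) y\<bar>" unfolding eeq using nnY by (simp add: abs_mult)
    finally show ?thesis using c d by (simp add: field_simps)
  qed
  have l1: "(\<lambda>k. (sqrt (t k) - 1)\<^sup>2) \<longlonglongrightarrow> 0"
  proof (rule Lim_null_comparison)
    show "\<forall>\<^sub>F k in sequentially. norm ((sqrt (t k) - 1)\<^sup>2) \<le> \<bar>ee (Suc k) y\<bar> / (c * \<delta>)"
      using bnd by (intro always_eventually allI) simp
    have "(\<lambda>k. ee (Suc k) y) \<longlonglongrightarrow> 0" using LIMSEQ_Suc[OF ee_lim] .
    hence "(\<lambda>k. \<bar>ee (Suc k) y\<bar>) \<longlonglongrightarrow> 0" by (simp add: tendsto_rabs_zero_iff)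
    thus "(\<lambda>k. \<bar>ee (Suc k) y\<bar> / (c * \<delta>)) \<longlonglongrightarrow> 0"
      using tendsto_divide_zero by blast
  qed
  have "(\<lambda>k. sqrt ((sqrt (t k) - 1)\<^sup>2)) \<longlonglongrightarrow> sqrt 0" using l1 by (rule tendsto_real_sqrt)
  hence "(\<lambda>k. \<bar>sqrt (t k) - 1\<bar>) \<longlonglongrightarrow> 0" by simp
  hence "(\<lambda>k. sqrt (t k) - 1) \<longlonglongrightarrow> 0" by (simp add: tendsto_rabs_zero_iff)
  hence s1: "(\<lambda>k. sqrt (t k)) \<longlonglongrightarrow> 1" by (simp add: LIM_zero_iff)
  have "(\<lambda>k. sqrt (t k) powr (2 * a)) \<longlonglongrightarrow> 1 powr (2 * a)"
    using s1 by (intro tendsto_powr) auto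
  moreover have "sqrt (t k) powr (2 * a) = t k powr a" for k
    using t0[of k] by (simp add: powr_half_sqrt[symmetric] powr_powr)
  ultimately have "(\<lambda>k. t k powr a) \<longlonglongrightarrow> 1" by simp
  hence "(\<lambda>k. (qY (Suc (Suc k)) y / qY (Suc k) y) powr a) \<longlonglongrightarrow> 1" unfolding t_def .
  thus ?thesis by (subst filterlim_sequentially_Suc[symmetric])
qed

end

context LPalg
begin

definition SS where "SS vs = (\<Sum>y\<in>UNIV. vs y * (if \<exists>x. 0 < p (x, y) then 1 else 0))"

lemma SS_le: assumes "is_dist vs" shows "SS vs \<le> 1"
proof -
  have "SS vs \<le> (\<Sum>y\<in>UNIV. vs y)" unfolding SS_def using assms
    by (intro sum_mono) (auto simp: is_dist_def)
  thus ?thesis using assms by (simp add: is_dist_def)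
qed

lemma R_lim: assumes lb: "\<And>x y. 0 < p (x, y) \<Longrightarrow> \<exists>\<delta>>0. \<forall>k. \<delta> \<le> qY (Suc k) y"
  shows "(\<lambda>k. R k vs) \<longlonglongrightarrow> SS vs"
  unfolding R_def SS_def
proof (intro tendsto_sum)
  fix y
  show "(\<lambda>k. vs y * (qY k y powr (1 - a) / qY k y) * qY (Suc k) y powr a) \<longlonglongrightarrow>
        vs y * (if \<exists>x. 0 < p (x, y) then 1 else 0)"
  proof (cases "\<exists>x. 0 < p (x, y)")
    case True
    then obtain x where pxy: "0 < p (x, y)" by blast
    obtain \<delta> where d: "0 < \<delta>" "\<forall>k. \<delta> \<le> qY (Suc k) y" using lb[OF pxy] by blast
    have eq: "vs y * (qY k y powr (1 - a) / qY k y) * qY (Suc k) y powr a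
            = vs y * (qY (Suc k) y / qY k y) powr a" for k
    proof -
      have v: "0 < qY k y" using posY[OF pxy] .
      have "qY k y powr (1 - a) * qY k y powr a = qY k y powr ((1 - a) + a)" by (rule powr_add[symmetric])
      hence "qY k y powr (1 - a) * qY k y powr a = qY k y" using v by simp
      hence "qY k y powr (1 - a) / qY k y = 1 / qY k y powr a" using v by (simp add: field_simps)
      thus ?thesis by (simp add: powr_divide)
    qed
    have "(\<lambda>k. vs y * (qY (Suc k) y / qY k y) powr a) \<longlonglongrightarrow> vs y * 1"
      using ratio_conv[OF d] by (intro tendsto_mult tendsto_const)
    thus ?thesis using True eq by simp
  next
    case False
    have "qY (Suc k) y = 0" for k
    proof (rule ccontr)
      assume "qY (Suc k) y \<noteq> 0"
      hence "0 < qY (Suc k) y" using nnY[of "Suc k" y] by simp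
      thus False using suppY False by blast
    qed
    thus ?thesis using False by simp
  qed
qed

lemma lb_all: assumes "a \<noteq> 1/2" shows "\<And>x y. 0 < p (x, y) \<Longrightarrow> \<exists>\<delta>>0. \<forall>k. \<delta> \<le> qY (Suc k) y"
proof -
  fix x y assume pxy: "0 < p (x, y)"
  show "\<exists>\<delta>>0. \<forall>k. \<delta> \<le> qY (Suc k) y"
  proof (cases "a < 1")
    case True
    have "1/2 < a" using a_ge assms by simp
    thus ?thesis using lb_lt1[OF True _ pxy] by blast
  next
    case False
    hence "1 < a" using a_ne by simp
    thus ?thesis using lb_gt1[OF _ pxy] by blast
  qed
qed

lemma M2_lt1: assumes lt: "a < 1" and us: "is_dist us" and vs: "is_dist vs"
  shows "FF a p us vs \<le> L"
proof (cases "a = 1/2")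
  case True thus ?thesis using half_M2 us vs by blast
next
  case False
  have lim: "(\<lambda>k. a * H k + (1 - a) * F (Suc k) * R k vs) \<longlonglongrightarrow> a * L + (1 - a) * L * SS vs"
    using H_lim LIMSEQ_Suc[OF F_lim] R_lim[OF lb_all[OF False]]
    by (intro tendsto_intros) auto
  have "FF a p us vs \<le> a * L + (1 - a) * L * SS vs"
    using main_ineq_lt1[OF lt us vs] by (intro LIMSEQ_le_const[OF lim]) auto
  also have "\<dots> \<le> a * L + (1 - a) * L * 1"
    using SS_le[OF vs] lt L_pos by (intro add_left_mono mult_left_mono) auto
  finally show ?thesis by (simp add: algebra_simps)
qed

lemma M2_gt1: assumes gt: "1 < a" and us: "is_dist us" and vs: "is_dist vs"
    and pos: "\<And>x y. 0 < p (x, y) \<Longrightarrow> 0 < us x \<and> 0 < vs y"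
  shows "L \<le> FF a p us vs"
proof -
  have F: "a \<noteq> 1/2" using gt by simp
  have lim: "(\<lambda>k. a * H k + (1 - a) * F (Suc k) * R k vs) \<longlonglongrightarrow> a * L + (1 - a) * L * SS vs"
    using H_lim LIMSEQ_Suc[OF F_lim] R_lim[OF lb_all[OF F]]
    by (intro tendsto_intros) auto
  have "L = a * L + (1 - a) * L * 1" by (simp add: algebra_simps)
  also have "\<dots> \<le> a * L + (1 - a) * L * SS vs"
  proof -
    have "(1 - a) * L \<le> 0" using gt L_pos by (simp add: mult_nonpos_nonneg)
    hence "(1 - a) * L * 1 \<le> (1 - a) * L * SS vs" using SS_le[OF vs] by (intro mult_left_mono_neg) auto
    thus ?thesis by simp
  qed
  also have "\<dots> \<le> FF a p us vs"
    using main_ineq_gt1[OF gt us vs pos] by (intro LIMSEQ_le_const2[OF lim]) auto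
  finally show ?thesis .
qed

end

lemma renyi_FF: "renyi_div a p (\<lambda>(x, y). u x * v y) =
   (if (1 < a \<and> (\<exists>z. 0 < p z \<and> (\<lambda>(x, y). u x * v y) z = 0)) \<or> FF a p u v = 0 then \<infinity>
    else ereal (ln (FF a p u v) / (a - 1)))"
  unfolding renyi_div_def Let_def FF_as_rho rho_def by simp

theorem proposition7:
  fixes \<alpha> :: real
    and p :: "'x::finite \<times> 'y::finite \<Rightarrow> real"
    and qX :: "nat \<Rightarrow> 'x \<Rightarrow> real"
    and qY :: "nat \<Rightarrow> 'y \<Rightarrow> real"
  assumes alpha: "1/2 \<le> \<alpha>" "\<alpha> \<noteq> 1"
    and p: "is_dist p"
    and init_X: "is_dist (qX 0)" "\<forall>x. 0 < qX 0 x"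
    and init_Y: "is_dist (qY 0)" "\<forall>y. 0 < qY 0 y"
    and step_X: "\<forall>k. qX (Suc k) = qX_star \<alpha> p (qY k)"
    and step_Y: "\<forall>k. qY (Suc k) = qY_star \<alpha> p (qX (Suc k))"
  shows "(\<lambda>k. renyi_div \<alpha> p (\<lambda>(x, y). qX k x * qY k y)) \<longlonglongrightarrow> I_LP \<alpha> p"
proof -
  interpret LPalg \<alpha> p qX qY using assms by unfold_locales auto
  define l where "l = ln L / (\<alpha> - 1)"
  have rd: "renyi_div \<alpha> p (\<lambda>(x, y). qX k x * qY k y) = ereal (ln (F k) / (\<alpha> - 1))" for k
  proof -
    have "\<not> (\<exists>z. 0 < p z \<and> (\<lambda>(x, y). qX k x * qY k y) z = 0)"
    proof
      assume "\<exists>z. 0 < p z \<and> (\<lambda>(x, y). qX k x * qY k y) z = 0"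
      then obtain x y where "0 < p (x, y)" "qX k x * qY k y = 0" by auto
      thus False using posX posY by (metis mult_eq_0_iff less_irrefl)
    qed
    moreover have "FF \<alpha> p (qX k) (qY k) \<noteq> 0" using F_pos[of k] by (simp add: F_def)
    ultimately show ?thesis unfolding renyi_FF F_def by auto
  qed
  have lim: "(\<lambda>k. ereal (ln (F k) / (\<alpha> - 1))) \<longlonglongrightarrow> ereal l"
  proof -
    have "(\<lambda>k. ln (F k) / (\<alpha> - 1)) \<longlonglongrightarrow> ln L / (\<alpha> - 1)"
      using F_lim L_pos alpha by (intro tendsto_intros) auto
    thus ?thesis unfolding l_def by (simp add: lim_ereal)
  qed
  have up: "I_LP \<alpha> p \<le> ereal l"
  proof (rule LIMSEQ_le_const[OF lim], intro exI allI impI)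
    fix k
    have "I_LP \<alpha> p \<le> renyi_div \<alpha> p (\<lambda>(x, y). qX k x * qY k y)"
      unfolding I_LP_def using distX distY
      by (intro INF_lower2[of "qX k"] INF_lower2[of "qY k"]) auto
    thus "I_LP \<alpha> p \<le> ereal (ln (F k) / (\<alpha> - 1))" using rd by simp
  qed
  have low: "ereal l \<le> I_LP \<alpha> p"
    unfolding I_LP_def
  proof (intro INF_greatest)
    fix u :: "'x \<Rightarrow> real" and v :: "'y \<Rightarrow> real"
    assume u: "u \<in> {q. is_dist q}" and v: "v \<in> {q. is_dist q}"
    hence ud: "is_dist u" and vd: "is_dist v" by auto
    show "ereal l \<le> renyi_div \<alpha> p (\<lambda>(x, y). u x * v y)"
    proof (cases "(1 < \<alpha> \<and> (\<exists>z. 0 < p z \<and> (\<lambda>(x, y). u x * v y) z = 0)) \<or> FF \<alpha> p u v = 0")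
      case True thus ?thesis unfolding renyi_FF by simp
    next
      case False
      hence ne: "FF \<alpha> p u v \<noteq> 0" by simp
      hence sp: "0 < FF \<alpha> p u v" using FF_nonneg[of \<alpha> p u v] by simp
      have "l \<le> ln (FF \<alpha> p u v) / (\<alpha> - 1)"
      proof (cases "\<alpha> < 1")
        case True
        have "FF \<alpha> p u v \<le> L" using M2_lt1[OF True ud vd] .
        hence "ln (FF \<alpha> p u v) \<le> ln L" using sp by simp
        thus ?thesis unfolding l_def using True by (intro divide_right_mono_neg) auto
      next
        case lt: False
        hence gt: "1 < \<alpha>" using alpha by simp
        have pos: "0 < u x \<and> 0 < v y" if "0 < p (x, y)" for x y
        proof -
          have "u x * v y \<noteq> 0" using False gt that by auto
          moreover have "0 \<le> u x" "0 \<le> v y" using ud vd by (auto simp: is_dist_def)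
          ultimately show ?thesis by (simp add: less_le)
        qed
        have "L \<le> FF \<alpha> p u v" using M2_gt1[OF gt ud vd pos] by blast
        hence "ln L \<le> ln (FF \<alpha> p u v)" using L_pos by simp
        thus ?thesis unfolding l_def using gt by (intro divide_right_mono) auto
      qed
      thus ?thesis unfolding renyi_FF using False by simp
    qed
  qed
  have "I_LP \<alpha> p = ereal l" using up low by simp
  thus ?thesis using lim rd by simp
qed


end
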